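(* Let $\epsilon_{fp},\delta_{fp},\epsilon_{fn},\delta_{fn}\in(0,1)$, $n,m\ge1$, and let $Z_{nm}=(x_1,\dots,x_n)\sim\mathcal D_{nm}^n$ and $Z_{ano}=(x'_1,\dots,x'_m)\sim\mathcal D_{ano}^m$. Let $\hat y_{ad}$ be the combined predictor defined in the context and define its error rate (over non-abstained predictions) $$\mathrm{ERR}=\Pr_{(x,y)\sim\mathcal D}\big(\hat y_{ad}(x)\ne *\ \text{and}\ \hat y_{ad}(x)\ne y\big).$$ Then, with $\epsilon_{ad}=\max(\epsilon_{fp},\epsilon_{fn})$ and $\delta_{ad}=\delta_{fp}+\delta_{fn}$, $$\Pr_{Z_{nm},Z_{ano}}\Big[\hat\tau_{fn}<\hat\tau_{fp}\ \text{ or }\ \mathrm{ERR}\le\epsilon_{ad}\Big]\ \ge\ 1-\delta_{ad},$$ i.e. with probability at least $1-\delta_{ad}$ over the calibration data, whenever $\hat\tau_{fn}\ge\hat\tau_{fp}$ the error rate is at most $\epsilon_{ad}$.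
   Context: Let $\mathcal X$ be a measurable space and $d:\mathcal X\to\mathbb R$ a fixed measurable anomaly-score function (independent of the calibration data). Let $\mathcal D$ be a distribution on $\mathcal X\times\{0,1\}$ (label $1$ = anomaly, $0$ = normal) with $0<\Pr(y=1)<1$; $\mathcal D_{nm}$ and $\mathcal D_{ano}$ are the conditional distributions of $x$ given $y=0$ and $y=1$. Assume the distributions of $d(x)$ under $\mathcal D_{nm}$ and under $\mathcal D_{ano}$ have no atoms. For $N\ge1$, $\epsilon,\delta\in(0,1)$: $F(k;N,\epsilon)=\sum_{i=0}^{k}\binom{N}{i}\epsilon^i(1-\epsilon)^{N-i}$, $F(-1;N,\epsilon)=0$, $k^*(N,\epsilon,\delta)=\max\{k\in\{-1,\dots,N\}:F(k;N,\epsilon)\le\delta\}$. Let $k^*_{fp}=k^*(n,\epsilon_{fp},\delta_{fp})$, $\hat\tau_{fp}$ = the $(k^*_{fp}+1)$-th largest of $d(x_1),\dots,d(x_n)$ ($0$-th largest $=+\infty$); $k^*_{fn}=k^*(m,\epsilon_{fn},\delta_{fn})$, $\hat\tau_{fn}$ = the $(k^*_{fn}+1)$-th smallest of $d(x'_1),\dots,d(x'_m)$ ($0$-th smallest $=-\infty$). Prediction sets: $C_{\hat\tau_{fp}}(x)=\{1\}$ if $d(x)\ge\hat\tau_{fp}$, else $\{0,1\}$; $C_{\hat\tau_{fn}}(x)=\{0,1\}$ if $d(x)\ge\hat\tau_{fn}$, else $\{0\}$. Combined set $C_{ad}(x)=C_{\hat\tau_{fn}}(x)\cap C_{\hat\tau_{fp}}(x)$,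 and $\hat y_{ad}(x)=1$ if $C_{ad}(x)=\{1\}$, $\hat y_{ad}(x)=0$ if $C_{ad}(x)=\{0\}$, and $\hat y_{ad}(x)=*$ (abstain) otherwise. *)

theory Defs
  imports "HOL-Probability.Probability"
begin

text \<open>Labels: True = anomaly (label 1), False = normal (label 0).\<close>

definition binom_cdf :: "int \<Rightarrow> nat \<Rightarrow> real \<Rightarrow> real" where
  "binom_cdf k N eps =
     (\<Sum>i\<in>{i. i \<le> N \<and> int i \<le> k}. real (N choose i) * eps ^ i * (1 - eps) ^ (N - i))"

definition k_star :: "nat \<Rightarrow> real \<Rightarrow> real \<Rightarrow> int" where
  "k_star N eps delta = Max {k \<in> {-1..int N}. binom_cdf k N eps \<le> delta}"

definition kth_largest :: "int \<Rightarrow> real list \<Rightarrow> ereal" where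
  "kth_largest k xs = (if k \<le> 0 then \<infinity> else ereal (rev (sort xs) ! nat (k - 1)))"

definition kth_smallest :: "int \<Rightarrow> real list \<Rightarrow> ereal" where
  "kth_smallest k xs = (if k \<le> 0 then -\<infinity> else ereal (sort xs ! nat (k - 1)))"

definition tau_fp :: "('a \<Rightarrow> real) \<Rightarrow> nat \<Rightarrow> real \<Rightarrow> real \<Rightarrow> (nat \<Rightarrow> 'a) \<Rightarrow> ereal" where
  "tau_fp d n eps delta Z = kth_largest (k_star n eps delta + 1) (map (\<lambda>i. d (Z i)) [0..<n])"

definition tau_fn :: "('a \<Rightarrow> real) \<Rightarrow> nat \<Rightarrow> real \<Rightarrow> real \<Rightarrow> (nat \<Rightarrow> 'a) \<Rightarrow> ereal" where
  "tau_fn d m eps delta Z = kth_smallest (k_star m eps delta + 1) (map (\<lambda>i. d (Z i)) [0..<m])"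

definition C_fp :: "('a \<Rightarrow> real) \<Rightarrow> ereal \<Rightarrow> 'a \<Rightarrow> bool set" where
  "C_fp d t x = (if ereal (d x) \<ge> t then {True} else {False, True})"

definition C_fn :: "('a \<Rightarrow> real) \<Rightarrow> ereal \<Rightarrow> 'a \<Rightarrow> bool set" where
  "C_fn d t x = (if ereal (d x) \<ge> t then {False, True} else {False})"

text \<open>Combined predictor: Some b = predicts label b, None = abstain (*).\<close>
definition y_ad :: "('a \<Rightarrow> real) \<Rightarrow> ereal \<Rightarrow> ereal \<Rightarrow> 'a \<Rightarrow> bool option" where
  "y_ad d tfn tfp x =
     (let C = C_fn d tfn x \<inter> C_fp d tfp x in
      if C = {True} then Some True else if C = {False} then Some False else None)"

definition cond_dist :: "('a \<times> bool) measure \<Rightarrow> 'a measure \<Rightarrow> bool \<Rightarrow> 'a measure" where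
  "cond_dist D M b = distr (uniform_measure D {p \<in> space D. snd p = b}) M fst"

end

theory Submission
  imports Defs
begin


lemma count_sort:
  "card {i. i < length (sort xs) \<and> P (sort xs ! i)} = card {i. i < length xs \<and> P (xs ! i)}"
proof -
  have "length (filter P (sort xs)) = length (filter P xs)"
    by (metis mset_filter mset_sort size_mset)
  then show ?thesis by (simp add: length_filter_conv_card)
qed

lemma sorted_count_ge:
  fixes ys :: "real list" and t :: ereal
  assumes s: "sorted ys" and j: "j < length ys"
  shows "t \<le> ereal (ys ! j) \<longleftrightarrow> length ys - j \<le> card {i. i < length ys \<and> t \<le> ereal (ys ! i)}"
proof
  assume h: "t \<le> ereal (ys ! j)"
  have "{j..<length ys} \<subseteq> {i. i < length ys \<and> t \<le> ereal (ys ! i)}"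
  proof
    fix i assume "i \<in> {j..<length ys}"
    then have "j \<le> i" "i < length ys" by auto
    then have "ys ! j \<le> ys ! i" using sorted_nth_mono[OF s] by blast
    then have "t \<le> ereal (ys ! i)" using h by (meson ereal_less_eq(3) order_trans)
    then show "i \<in> {i. i < length ys \<and> t \<le> ereal (ys ! i)}" using \<open>i < length ys\<close> by simp
  qed
  from card_mono[OF _ this] show "length ys - j \<le> card {i. i < length ys \<and> t \<le> ereal (ys ! i)}" by simp
next
  assume h: "length ys - j \<le> card {i. i < length ys \<and> t \<le> ereal (ys ! i)}"
  show "t \<le> ereal (ys ! j)"
  proof (rule ccontr)
    assume "\<not> t \<le> ereal (ys ! j)"
    then have lt: "ereal (ys ! j) < t" by simp
    have "{i. i < length ys \<and> t \<le> ereal (ys ! i)} \<subseteq> {Suc j..<length ys}"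
    proof
      fix i assume i: "i \<in> {i. i < length ys \<and> t \<le> ereal (ys ! i)}"
      have "Suc j \<le> i"
      proof (rule ccontr)
        assume "\<not> Suc j \<le> i"
        then have "i \<le> j" by simp
        then have "ys ! i \<le> ys ! j" using sorted_nth_mono[OF s] j by blast
        moreover have "t \<le> ereal (ys ! i)" using i by simp
        ultimately have "t \<le> ereal (ys ! j)" by (meson ereal_less_eq(3) order_trans)
        then show False using lt by simp
      qed
      then show "i \<in> {Suc j..<length ys}" using i by auto
    qed
    from card_mono[OF _ this] have "card {i. i < length ys \<and> t \<le> ereal (ys ! i)} \<le> length ys - Suc j" by simp
    with h j show False by linarith
  qed
qed

lemma sorted_count_le:
  fixes ys :: "real list" and t :: ereal
  assumes s: "sorted ys" and j: "j < length ys"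
  shows "ereal (ys ! j) \<le> t \<longleftrightarrow> Suc j \<le> card {i. i < length ys \<and> ereal (ys ! i) \<le> t}"
proof
  assume h: "ereal (ys ! j) \<le> t"
  have "{0..<Suc j} \<subseteq> {i. i < length ys \<and> ereal (ys ! i) \<le> t}"
  proof
    fix i assume "i \<in> {0..<Suc j}"
    then have "i \<le> j" "i < length ys" using j by auto
    then have "ys ! i \<le> ys ! j" using sorted_nth_mono[OF s] j by blast
    then have "ereal (ys ! i) \<le> t" using h by (meson ereal_less_eq(3) order_trans)
    then show "i \<in> {i. i < length ys \<and> ereal (ys ! i) \<le> t}" using \<open>i < length ys\<close> by simp
  qed
  from card_mono[OF _ this] show "Suc j \<le> card {i. i < length ys \<and> ereal (ys ! i) \<le> t}" by simp
next
  assume h: "Suc j \<le> card {i. i < length ys \<and> ereal (ys ! i) \<le> t}"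
  show "ereal (ys ! j) \<le> t"
  proof (rule ccontr)
    assume "\<not> ereal (ys ! j) \<le> t"
    then have lt: "t < ereal (ys ! j)" by simp
    have "{i. i < length ys \<and> ereal (ys ! i) \<le> t} \<subseteq> {0..<j}"
    proof
      fix i assume i: "i \<in> {i. i < length ys \<and> ereal (ys ! i) \<le> t}"
      have "i < j"
      proof (rule ccontr)
        assume "\<not> i < j"
        then have "j \<le> i" by simp
        then have "ys ! j \<le> ys ! i" using sorted_nth_mono[OF s] i by blast
        moreover have "ereal (ys ! i) \<le> t" using i by simp
        ultimately have "ereal (ys ! j) \<le> t" by (meson ereal_less_eq(3) order_trans)
        then show False using lt by simp
      qed
      then show "i \<in> {0..<j}" using i by auto
    qed
    from card_mono[OF _ this] have "card {i. i < length ys \<and> ereal (ys ! i) \<le> t} \<le> j" by simp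
    with h show False by linarith
  qed
qed

lemma kl_char:
  fixes xs :: "real list" and t :: ereal and k :: int
  assumes "-1 \<le> k" "k < int (length xs)"
  shows "t \<le> kth_largest (k+1) xs \<longleftrightarrow> k + 1 \<le> int (card {i. i < length xs \<and> t \<le> ereal (xs ! i)})"
proof (cases "k = -1")
  case True then show ?thesis by (simp add: kth_largest_def)
next
  case False
  then have k0: "0 \<le> k" using assms by simp
  define ys where "ys = sort xs"
  define N where "N = length xs"
  have lys: "length ys = N" by (simp add: ys_def N_def)
  have kN: "nat k < N" using assms k0 N_def by linarith
  have "kth_largest (k+1) xs = ereal (rev ys ! nat k)" using k0 by (simp add: kth_largest_def ys_def)
  also have "rev ys ! nat k = ys ! (N - 1 - nat k)" using kN lys by (simp add: rev_nth)
  finally have eq: "kth_largest (k+1) xs = ereal (ys ! (N - 1 - nat k))" .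
  have "t \<le> ereal (ys ! (N - 1 - nat k)) \<longleftrightarrow> N - (N - 1 - nat k) \<le> card {i. i < N \<and> t \<le> ereal (ys ! i)}"
    using sorted_count_ge[of ys "N - 1 - nat k" t] kN lys by (simp add: ys_def)
  also have "card {i. i < N \<and> t \<le> ereal (ys ! i)} = card {i. i < length xs \<and> t \<le> ereal (xs ! i)}"
    using count_sort[of xs "\<lambda>v. t \<le> ereal v"] by (simp add: ys_def N_def)
  also have "N - (N - 1 - nat k) = nat k + 1" using kN by simp
  finally have e2: "t \<le> ereal (ys ! (N - 1 - nat k)) \<longleftrightarrow> nat k + 1 \<le> card {i. i < length xs \<and> t \<le> ereal (xs ! i)}" .
  have "nat k + 1 \<le> card {i. i < length xs \<and> t \<le> ereal (xs ! i)} \<longleftrightarrow> k + 1 \<le> int (card {i. i < length xs \<and> t \<le> ereal (xs ! i)})"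
    using k0 by linarith
  then show ?thesis using eq e2 by simp
qed

lemma ks_char:
  fixes xs :: "real list" and t :: ereal and k :: int
  assumes "-1 \<le> k" "k < int (length xs)"
  shows "kth_smallest (k+1) xs \<le> t \<longleftrightarrow> k + 1 \<le> int (card {i. i < length xs \<and> ereal (xs ! i) \<le> t})"
proof (cases "k = -1")
  case True then show ?thesis by (simp add: kth_smallest_def)
next
  case False
  then have k0: "0 \<le> k" using assms by simp
  define ys where "ys = sort xs"
  have kN: "nat k < length ys" using assms k0 by (simp add: ys_def)
  have eq: "kth_smallest (k+1) xs = ereal (ys ! nat k)" using k0 by (simp add: kth_smallest_def ys_def)
  have "ereal (ys ! nat k) \<le> t \<longleftrightarrow> Suc (nat k) \<le> card {i. i < length ys \<and> ereal (ys ! i) \<le> t}"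
    using sorted_count_le[of ys "nat k" t] kN by (simp add: ys_def)
  also have "card {i. i < length ys \<and> ereal (ys ! i) \<le> t} = card {i. i < length xs \<and> ereal (xs ! i) \<le> t}"
    using count_sort[of xs "\<lambda>v. ereal v \<le> t"] by (simp add: ys_def)
  finally have e2: "ereal (ys ! nat k) \<le> t \<longleftrightarrow> Suc (nat k) \<le> card {i. i < length xs \<and> ereal (xs ! i) \<le> t}" .
  have "Suc (nat k) \<le> card {i. i < length xs \<and> ereal (xs ! i) \<le> t} \<longleftrightarrow> k + 1 \<le> int (card {i. i < length xs \<and> ereal (xs ! i) \<le> t})"
    using k0 by linarith
  then show ?thesis using eq e2 by simp
qed



lemma binom_cdf_neg: "binom_cdf (-1) N eps = 0"
  unfolding binom_cdf_def by simp

lemma binom_cdf_N: "binom_cdf (int N) N eps = 1"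
proof -
  have "{i. i \<le> N \<and> int i \<le> int N} = {..N}" by auto
  then have "binom_cdf (int N) N eps = (\<Sum>i\<le>N. real (N choose i) * eps ^ i * (1 - eps) ^ (N - i))"
    unfolding binom_cdf_def by simp
  also have "\<dots> = (eps + (1 - eps)) ^ N" using binomial_ring[of eps "1-eps" N] by simp
  finally show ?thesis by simp
qed

lemma k_star_props:
  assumes "0 < delta" "delta < 1"
  shows "-1 \<le> k_star N eps delta" "k_star N eps delta < int N"
    "binom_cdf (k_star N eps delta) N eps \<le> delta"
proof -
  define K where "K = {k \<in> {-1..int N}. binom_cdf k N eps \<le> delta}"
  have fin: "finite K" unfolding K_def by (rule finite_subset[of _ "{-1..int N}"]) auto
  have m1: "-1 \<in> K" unfolding K_def using assms by (simp add: binom_cdf_neg)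
  then have ne: "K \<noteq> {}" by auto
  have ks: "k_star N eps delta = Max K" unfolding K_def k_star_def by simp
  have inK: "Max K \<in> K" using Max_in[OF fin ne] .
  show "-1 \<le> k_star N eps delta" using inK ks unfolding K_def by auto
  show "binom_cdf (k_star N eps delta) N eps \<le> delta" using inK ks unfolding K_def by auto
  have "Max K \<noteq> int N" using inK assms unfolding K_def by (auto simp: binom_cdf_N)
  then show "k_star N eps delta < int N" using inK ks unfolding K_def by auto
qed

lemma binom_PiM:
  assumes P: "prob_space P" and A: "A \<in> sets P"
  shows "measure (PiM {0..<n} (\<lambda>_. P))
     {Z \<in> space (PiM {0..<n} (\<lambda>_. P)). int (card {i. i < n \<and> Z i \<in> A}) \<le> k}
     = binom_cdf k n (measure P A)"
proof -
  interpret P: prob_space P by fact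
  interpret ps: product_sigma_finite "\<lambda>_. P"
    by (simp add: product_sigma_finite_def prob_space_imp_sigma_finite P)
  interpret pp: prob_space "PiM {0..<n} (\<lambda>_. P)" by (rule prob_space_PiM) (rule P)
  define p where "p = measure P A"
  define F where "F = {S. S \<subseteq> {0..<n} \<and> int (card S) \<le> k}"
  define B where "B = (\<lambda>S (i::nat). if i \<in> S then A else space P - A)"
  define E where "E S = PiE {0..<n} (B S)" for S
  have Asp: "A \<subseteq> space P" using A sets.sets_into_space by auto
  have Bs: "B S i \<in> sets P" for S i
    by (cases "i \<in> S") (simp_all add: B_def A sets.Diff[OF sets.top A])
  have Es: "E S \<in> sets (PiM {0..<n} (\<lambda>_. P))" for S
    unfolding E_def by (rule sets_PiM_I_finite) (auto simp: Bs)
  have finF: "finite F" unfolding F_def by (rule finite_subset[of _ "Pow {0..<n}"]) auto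
  have seteq: "{Z \<in> space (PiM {0..<n} (\<lambda>_. P)). int (card {i. i < n \<and> Z i \<in> A}) \<le> k} = (\<Union>S\<in>F. E S)"
  proof (intro equalityI subsetI)
    fix Z assume Z: "Z \<in> {Z \<in> space (PiM {0..<n} (\<lambda>_. P)). int (card {i. i < n \<and> Z i \<in> A}) \<le> k}"
    define S where "S = {i. i < n \<and> Z i \<in> A}"
    have "S \<in> F" using Z unfolding F_def S_def by auto
    moreover have "Z \<in> E S" using Z unfolding E_def B_def S_def by (auto simp: space_PiM PiE_iff)
    ultimately show "Z \<in> (\<Union>S\<in>F. E S)" by blast
  next
    fix Z assume "Z \<in> (\<Union>S\<in>F. E S)"
    then obtain S where S: "S \<in> F" "Z \<in> E S" by blast
    have ZB: "Z i \<in> B S i" if "i < n" for i using S that unfolding E_def by (auto simp: PiE_iff)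
    have SF: "S \<subseteq> {0..<n}" using S unfolding F_def by auto
    have "{i. i < n \<and> Z i \<in> A} = S"
    proof (intro equalityI subsetI)
      fix i assume "i \<in> {i. i < n \<and> Z i \<in> A}"
      then have "i < n" "Z i \<in> A" by auto
      then show "i \<in> S" using ZB[of i] by (auto simp: B_def split: if_splits)
    next
      fix i assume "i \<in> S"
      then have "i < n" using SF by auto
      then show "i \<in> {i. i < n \<and> Z i \<in> A}" using ZB[of i] \<open>i \<in> S\<close> by (auto simp: B_def)
    qed
    moreover have "Z \<in> space (PiM {0..<n} (\<lambda>_. P))"
    proof -
      have "Z i \<in> space P" if "i < n" for i using ZB[OF that] Asp by (auto simp: B_def split: if_splits)
      moreover have "Z \<in> extensional {0..<n}" using S unfolding E_def by (auto simp: PiE_iff)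
      ultimately show ?thesis by (auto simp: space_PiM PiE_iff)
    qed
    ultimately show "Z \<in> {Z \<in> space (PiM {0..<n} (\<lambda>_. P)). int (card {i. i < n \<and> Z i \<in> A}) \<le> k}"
      using S unfolding F_def by auto
  qed
  have disj: "disjoint_family_on E F"
  proof (unfold disjoint_family_on_def, intro ballI impI)
    fix S T assume ST: "S \<in> F" "T \<in> F" "S \<noteq> T"
    have "\<exists>i. (i \<in> S) \<noteq> (i \<in> T)" using ST(3) by blast
    then obtain i where i2: "(i \<in> S) \<noteq> (i \<in> T)" by blast
    have "i < n" using i2 ST unfolding F_def by auto
    note i = this i2
    show "E S \<inter> E T = {}"
    proof (rule ccontr)
      assume "E S \<inter> E T \<noteq> {}"
      then obtain Z where "Z \<in> E S" "Z \<in> E T" by blast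
      then have "Z i \<in> B S i" "Z i \<in> B T i" using i unfolding E_def by (auto simp: PiE_iff)
      then show False using i unfolding B_def by (auto split: if_splits)
    qed
  qed
  have mE: "measure (PiM {0..<n} (\<lambda>_. P)) (E S) = p ^ card S * (1 - p) ^ (n - card S)" if S: "S \<subseteq> {0..<n}" for S
  proof -
    have "emeasure (PiM {0..<n} (\<lambda>_. P)) (E S) = (\<Prod>i\<in>{0..<n}. emeasure P (B S i))"
      unfolding E_def by (rule ps.emeasure_PiM) (auto simp: Bs)
    also have "\<dots> = (\<Prod>i\<in>{0..<n}. ennreal (if i \<in> S then p else 1 - p))"
      by (intro prod.cong refl) (auto simp: B_def p_def P.emeasure_eq_measure P.prob_compl A)
    also have "\<dots> = ennreal (\<Prod>i\<in>{0..<n}. (if i \<in> S then p else 1 - p))"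
      by (rule prod_ennreal) (auto simp: p_def P.prob_le_1)
    finally have e: "emeasure (PiM {0..<n} (\<lambda>_. P)) (E S) = ennreal (\<Prod>i\<in>{0..<n}. (if i \<in> S then p else 1 - p))" .
    have nn: "0 \<le> (\<Prod>i\<in>{0..<n}. (if i \<in> S then p else 1 - p))"
      by (rule prod_nonneg) (auto simp: p_def P.prob_le_1)
    have "measure (PiM {0..<n} (\<lambda>_. P)) (E S) = (\<Prod>i\<in>{0..<n}. (if i \<in> S then p else 1 - p))"
      using e nn by (simp add: measure_def)
    also have "\<dots> = (\<Prod>i\<in>{0..<n} \<inter> {i. i \<in> S}. p) * (\<Prod>i\<in>{0..<n} \<inter> - {i. i \<in> S}. 1 - p)"
      by (rule prod.If_cases) simp
    also have "{0..<n} \<inter> {i. i \<in> S} = S" using S by auto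
    also have "card ({0..<n} \<inter> - {i. i \<in> S}) = n - card S"
    proof -
      have "{0..<n} \<inter> - {i. i \<in> S} = {0..<n} - S" by auto
      then show ?thesis using S by (simp add: card_Diff_subset finite_subset)
    qed
    then have "(\<Prod>i\<in>{0..<n} \<inter> - {i. i \<in> S}. 1 - p) = (1 - p) ^ (n - card S)" by simp
    finally show ?thesis by simp
  qed
  have "measure (PiM {0..<n} (\<lambda>_. P)) (\<Union>S\<in>F. E S) = (\<Sum>S\<in>F. measure (PiM {0..<n} (\<lambda>_. P)) (E S))"
    by (rule measure_finite_Union) (auto simp: finF Es disj pp.emeasure_eq_measure)
  also have "\<dots> = (\<Sum>S\<in>F. p ^ card S * (1 - p) ^ (n - card S))"
    by (intro sum.cong refl mE) (auto simp: F_def)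
  also have "\<dots> = binom_cdf k n p"
  proof -
    define J where "J = {j. j \<le> n \<and> int j \<le> k}"
    define G where "G j = {S. S \<subseteq> {0..<n} \<and> card S = j}" for j
    have FG: "F = (\<Union>j\<in>J. G j)"
    proof (intro equalityI subsetI)
      fix S assume "S \<in> F"
      then have "S \<subseteq> {0..<n}" "int (card S) \<le> k" unfolding F_def by auto
      moreover have "card S \<le> n" using card_mono[OF _ \<open>S \<subseteq> {0..<n}\<close>] by simp
      ultimately show "S \<in> (\<Union>j\<in>J. G j)" unfolding J_def G_def by auto
    next
      fix S assume "S \<in> (\<Union>j\<in>J. G j)"
      then show "S \<in> F" unfolding J_def G_def F_def by auto
    qed
    have finG: "finite (G j)" for j unfolding G_def by (rule finite_subset[of _ "Pow {0..<n}"]) auto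
    have "(\<Sum>S\<in>F. p ^ card S * (1 - p) ^ (n - card S)) = (\<Sum>j\<in>J. \<Sum>S\<in>G j. p ^ card S * (1 - p) ^ (n - card S))"
      unfolding FG by (rule sum.UNION_disjoint) (auto simp: J_def finG G_def)
    also have "\<dots> = (\<Sum>j\<in>J. real (n choose j) * p ^ j * (1 - p) ^ (n - j))"
    proof (rule sum.cong[OF refl])
      fix j assume "j \<in> J"
      have "(\<Sum>S\<in>G j. p ^ card S * (1 - p) ^ (n - card S)) = (\<Sum>S\<in>G j. p ^ j * (1 - p) ^ (n - j))"
        by (rule sum.cong) (auto simp: G_def)
      also have "\<dots> = real (card (G j)) * (p ^ j * (1 - p) ^ (n - j))" by simp
      also have "card (G j) = n choose j" unfolding G_def using n_subsets[of "{0..<n}" j] by simp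
      finally show "(\<Sum>S\<in>G j. p ^ card S * (1 - p) ^ (n - card S)) = real (n choose j) * p ^ j * (1 - p) ^ (n - j)"
        by simp
    qed
    finally show ?thesis unfolding binom_cdf_def J_def by simp
  qed
  finally show ?thesis using seteq by (simp add: p_def)
qed



lemma exists_threshold:
  fixes s :: "'a \<Rightarrow> real"
  assumes P: "prob_space P" and s: "s \<in> borel_measurable P"
    and na: "\<And>t. measure P {x \<in> space P. s x = t} = 0"
    and c: "0 < c" "c < 1"
  shows "\<exists>t. measure P {x \<in> space P. s x \<le> t} = c"
proof -
  interpret P: prob_space P by fact
  define mu where "mu = distr P borel s"
  interpret mu: real_distribution mu unfolding mu_def using s by simp
  have cdf_eq: "cdf mu t = measure P {x \<in> space P. s x \<le> t}" for t
    unfolding cdf_def mu_def using s by (subst measure_distr) (auto intro!: arg_cong[where f="measure P"])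
  have cont: "isCont (cdf mu) t" for t
  proof -
    have "measure mu {t} = measure P {x \<in> space P. s x = t}"
      unfolding mu_def using s by (subst measure_distr) (auto intro!: arg_cong[where f="measure P"])
    then show ?thesis using na mu.isCont_cdf by simp
  qed
  have "eventually (\<lambda>t. cdf mu t < c) at_bot"
    using mu.cdf_lim_at_bot c by (simp add: order_tendstoD(2))
  then obtain a where a: "\<And>t. t \<le> a \<Longrightarrow> cdf mu t < c" by (auto simp: eventually_at_bot_linorder)
  have "eventually (\<lambda>t. c < cdf mu t) at_top"
    using mu.cdf_lim_at_top_prob c by (simp add: order_tendstoD(1))
  then obtain b0 where b0: "\<And>t. b0 \<le> t \<Longrightarrow> c < cdf mu t" by (auto simp: eventually_at_top_linorder)
  define b where "b = max a b0"
  have "cdf mu a \<le> c" using a[of a] by simp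
  moreover have "c \<le> cdf mu b" using b0[of b] by (simp add: b_def)
  moreover have "a \<le> b" by (simp add: b_def)
  moreover have "continuous_on {a..b} (cdf mu)" using cont by (simp add: continuous_at_imp_continuous_on)
  ultimately obtain t where "cdf mu t = c" using IVT'[of "cdf mu" a c b] by blast
  then show ?thesis using cdf_eq by auto
qed

lemma ge_measure:
  fixes s :: "'a \<Rightarrow> real"
  assumes P: "prob_space P" and s: "s \<in> borel_measurable P"
    and na: "\<And>t. measure P {x \<in> space P. s x = t} = 0"
  shows "measure P {x \<in> space P. t \<le> s x} = 1 - measure P {x \<in> space P. s x \<le> t}"
    "measure P {x \<in> space P. s x < t} = measure P {x \<in> space P. s x \<le> t}"
proof -
  interpret P: prob_space P by fact
  have [measurable]: "s \<in> borel_measurable P" by fact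
  have c: "(\<lambda>x. t) \<in> borel_measurable P" by simp
  have m1: "{x \<in> space P. s x \<le> t} \<in> sets P" "{x \<in> space P. s x < t} \<in> sets P"
    "{x \<in> space P. s x = t} \<in> sets P" "{x \<in> space P. t \<le> s x} \<in> sets P"
    using borel_measurable_le[OF s c] borel_measurable_less[OF s c] borel_measurable_eq[OF s c]
      borel_measurable_le[OF c s] by auto
  have eq1: "{x \<in> space P. s x \<le> t} = {x \<in> space P. s x < t} \<union> {x \<in> space P. s x = t}" by auto
  have "measure P ({x \<in> space P. s x < t} \<union> {x \<in> space P. s x = t}) = measure P {x \<in> space P. s x < t} + measure P {x \<in> space P. s x = t}"
    by (rule P.finite_measure_Union) (use m1 in auto)
  then have "measure P {x \<in> space P. s x \<le> t} = measure P {x \<in> space P. s x < t} + measure P {x \<in> space P. s x = t}"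
    by (simp only: eq1)
  then show lt: "measure P {x \<in> space P. s x < t} = measure P {x \<in> space P. s x \<le> t}" using na[of t] by linarith
  have eq2: "{x \<in> space P. t \<le> s x} = space P - {x \<in> space P. s x < t}" by auto
  have "measure P (space P - {x \<in> space P. s x < t}) = 1 - measure P {x \<in> space P. s x < t}"
    by (rule P.prob_compl) (rule m1)
  then show "measure P {x \<in> space P. t \<le> s x} = 1 - measure P {x \<in> space P. s x \<le> t}"
    using lt by (simp only: eq2)
qed



lemma mono_ereal_meas:
  fixes h :: "ereal \<Rightarrow> real"
  assumes "mono h"
  shows "h \<in> borel_measurable borel"
proof -
  define g where "g = (\<lambda>x::real. h (ereal x))"
  have "mono g" using assms unfolding g_def mono_def by simp
  then have g: "g \<in> borel_measurable borel" by (rule borel_measurable_mono)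
  have gr: "(\<lambda>x. g (real_of_ereal x)) \<in> borel_measurable (borel :: ereal measure)"
    by (rule measurable_compose[OF borel_measurable_real_of_ereal[OF measurable_ident_sets[OF refl]] g])
  have s1: "{x \<in> space (borel::ereal measure). x = \<infinity>} \<in> sets borel"
  proof -
    have "{x \<in> space (borel::ereal measure). x = \<infinity>} = {\<infinity>}" by auto
    then show ?thesis by (simp add: borel_closed)
  qed
  have s2: "{x \<in> space (borel::ereal measure). x = -\<infinity>} \<in> sets borel"
  proof -
    have "{x \<in> space (borel::ereal measure). x = -\<infinity>} = {-\<infinity>}" by auto
    then show ?thesis by (simp add: borel_closed)
  qed
  have "(\<lambda>x. if x = \<infinity> then h \<infinity> else if x = -\<infinity> then h (-\<infinity>) else g (real_of_ereal x)) \<in> borel_measurable borel"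
    by (intro measurable_If gr s1 s2 measurable_const) simp_all
  moreover have "(\<lambda>x. if x = \<infinity> then h \<infinity> else if x = -\<infinity> then h (-\<infinity>) else g (real_of_ereal x)) = h"
  proof
    fix x show "(if x = \<infinity> then h \<infinity> else if x = -\<infinity> then h (-\<infinity>) else g (real_of_ereal x)) = h x"
      by (cases x) (auto simp: g_def)
  qed
  ultimately show ?thesis by simp
qed

lemma antimono_ereal_meas:
  fixes h :: "ereal \<Rightarrow> real"
  assumes "antimono h"
  shows "h \<in> borel_measurable borel"
proof -
  have "mono (\<lambda>x. - h x)" using assms unfolding mono_def antimono_def by simp
  then have "(\<lambda>x. - h x) \<in> borel_measurable borel" by (rule mono_ereal_meas)
  then have "(\<lambda>x. - (- h x)) \<in> borel_measurable borel" by (rule borel_measurable_uminus)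
  then show ?thesis by simp
qed

lemma count_le_sets:
  fixes n :: nat and k :: int
  assumes A: "A \<in> sets P"
  shows "{Z \<in> space (PiM {0..<n} (\<lambda>_. P)). int (card {i. i < n \<and> Z i \<in> A}) \<le> k} \<in> sets (PiM {0..<n} (\<lambda>_. P))"
proof -
  define F where "F = {S. S \<subseteq> {0..<n} \<and> int (card S) \<le> k}"
  define B where "B = (\<lambda>S (i::nat). if i \<in> S then A else space P - A)"
  define E where "E S = PiE {0..<n} (B S)" for S
  have Asp: "A \<subseteq> space P" using A sets.sets_into_space by auto
  have Bs: "B S i \<in> sets P" for S i
    by (cases "i \<in> S") (simp_all add: B_def A sets.Diff[OF sets.top A])
  have Es: "E S \<in> sets (PiM {0..<n} (\<lambda>_. P))" for S
    unfolding E_def by (rule sets_PiM_I_finite) (auto simp: Bs)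
  have finF: "finite F" unfolding F_def by (rule finite_subset[of _ "Pow {0..<n}"]) auto
  have seteq: "{Z \<in> space (PiM {0..<n} (\<lambda>_. P)). int (card {i. i < n \<and> Z i \<in> A}) \<le> k} = (\<Union>S\<in>F. E S)"
  proof (intro equalityI subsetI)
    fix Z assume Z: "Z \<in> {Z \<in> space (PiM {0..<n} (\<lambda>_. P)). int (card {i. i < n \<and> Z i \<in> A}) \<le> k}"
    define S where "S = {i. i < n \<and> Z i \<in> A}"
    have "S \<in> F" using Z unfolding F_def S_def by auto
    moreover have "Z \<in> E S" using Z unfolding E_def B_def S_def by (auto simp: space_PiM PiE_iff)
    ultimately show "Z \<in> (\<Union>S\<in>F. E S)" by blast
  next
    fix Z assume "Z \<in> (\<Union>S\<in>F. E S)"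
    then obtain S where S: "S \<in> F" "Z \<in> E S" by blast
    have ZB: "Z i \<in> B S i" if "i < n" for i using S that unfolding E_def by (auto simp: PiE_iff)
    have SF: "S \<subseteq> {0..<n}" using S unfolding F_def by auto
    have "{i. i < n \<and> Z i \<in> A} = S"
    proof (intro equalityI subsetI)
      fix i assume "i \<in> {i. i < n \<and> Z i \<in> A}"
      then have "i < n" "Z i \<in> A" by auto
      then show "i \<in> S" using ZB[of i] by (auto simp: B_def split: if_splits)
    next
      fix i assume "i \<in> S"
      then have "i < n" using SF by auto
      then show "i \<in> {i. i < n \<and> Z i \<in> A}" using ZB[of i] \<open>i \<in> S\<close> by (auto simp: B_def)
    qed
    moreover have "Z \<in> space (PiM {0..<n} (\<lambda>_. P))"
    proof -
      have "Z i \<in> space P" if "i < n" for i using ZB[OF that] Asp by (auto simp: B_def split: if_splits)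
      moreover have "Z \<in> extensional {0..<n}" using S unfolding E_def by (auto simp: PiE_iff)
      ultimately show ?thesis by (auto simp: space_PiM PiE_iff)
    qed
    ultimately show "Z \<in> {Z \<in> space (PiM {0..<n} (\<lambda>_. P)). int (card {i. i < n \<and> Z i \<in> A}) \<le> k}"
      using S unfolding F_def by auto
  qed
  show ?thesis unfolding seteq using finF Es by (intro sets.finite_UN) auto
qed

lemma count_ge_sets:
  fixes n :: nat and c :: int
  assumes A: "A \<in> sets P"
  shows "{Z \<in> space (PiM {0..<n} (\<lambda>_. P)). c \<le> int (card {i. i < n \<and> Z i \<in> A})} \<in> sets (PiM {0..<n} (\<lambda>_. P))"
proof -
  have "{Z \<in> space (PiM {0..<n} (\<lambda>_. P)). c \<le> int (card {i. i < n \<and> Z i \<in> A})}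
    = space (PiM {0..<n} (\<lambda>_. P)) - {Z \<in> space (PiM {0..<n} (\<lambda>_. P)). int (card {i. i < n \<and> Z i \<in> A}) \<le> c - 1}"
    by auto
  then show ?thesis using count_le_sets[OF A, of n "c - 1"] by (simp add: sets.compl_sets)
qed

lemma card_map_eq:
  fixes n :: nat
  assumes "\<And>i. i < n \<Longrightarrow> Q (s (Z i)) = (Z i \<in> A)"
  shows "card {i. i < length (map (\<lambda>i. s (Z i)) [0..<n]) \<and> Q (map (\<lambda>i. s (Z i)) [0..<n] ! i)}
       = card {i. i < n \<and> Z i \<in> A}"
proof -
  have "{i. i < length (map (\<lambda>i. s (Z i)) [0..<n]) \<and> Q (map (\<lambda>i. s (Z i)) [0..<n] ! i)} = {i. i < n \<and> Z i \<in> A}"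
    using assms by auto
  then show ?thesis by simp
qed



lemma fp_bound:
  fixes s :: "'a \<Rightarrow> real" and n :: nat
  assumes P: "prob_space P" and s: "s \<in> borel_measurable P"
    and na: "\<And>t. measure P {x \<in> space P. s x = t} = 0"
    and eps: "0 < eps" "eps < 1" and delta: "0 < delta" "delta < 1"
  shows "{Z \<in> space (PiM {0..<n} (\<lambda>_. P)).
            measure P {x \<in> space P. kth_largest (k_star n eps delta + 1) (map (\<lambda>i. s (Z i)) [0..<n]) \<le> ereal (s x)} \<le> eps}
          \<in> sets (PiM {0..<n} (\<lambda>_. P))" (is "?Good \<in> _")
    and "measure (PiM {0..<n} (\<lambda>_. P)) {Z \<in> space (PiM {0..<n} (\<lambda>_. P)).
            measure P {x \<in> space P. kth_largest (k_star n eps delta + 1) (map (\<lambda>i. s (Z i)) [0..<n]) \<le> ereal (s x)} \<le> eps}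
          \<ge> 1 - delta"
proof -
  interpret P: prob_space P by fact
  let ?PM = "PiM {0..<n} (\<lambda>_. P)"
  interpret PM: prob_space ?PM by (rule prob_space_PiM) (rule P)
  define k where "k = k_star n eps delta"
  have k1: "-1 \<le> k" and k2: "k < int n" and k3: "binom_cdf k n eps \<le> delta"
    using k_star_props[OF delta, of n eps] unfolding k_def by auto
  define tau where "tau Z = kth_largest (k+1) (map (\<lambda>i. s (Z i)) [0..<n])" for Z
  define sA where "sA t = {x \<in> space P. t \<le> ereal (s x)}" for t
  define G where "G t = measure P (sA t)" for t
  have es: "(\<lambda>x. ereal (s x)) \<in> borel_measurable P" using s by (rule borel_measurable_ereal)
  have sAs: "sA t \<in> sets P" for t
    unfolding sA_def by (rule borel_measurable_le[OF measurable_const es]) simp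
  have Ganti: "antimono G"
  proof (rule antimonoI)
    fix a b :: ereal assume "a \<le> b"
    then have "sA b \<subseteq> sA a" unfolding sA_def by (auto intro: order_trans)
    then show "G b \<le> G a" unfolding G_def by (intro P.finite_measure_mono sAs)
  qed
  have Zsp: "Z i \<in> space P" if "Z \<in> space ?PM" "i < n" for Z i
    using that by (auto simp: space_PiM PiE_iff)
  have tau_char: "y \<le> tau Z \<longleftrightarrow> k + 1 \<le> int (card {i. i < n \<and> Z i \<in> sA y})" if Z: "Z \<in> space ?PM" for Z y
  proof -
    have "y \<le> tau Z \<longleftrightarrow> k + 1 \<le> int (card {i. i < length (map (\<lambda>i. s (Z i)) [0..<n]) \<and> y \<le> ereal (map (\<lambda>i. s (Z i)) [0..<n] ! i)})"
      unfolding tau_def using kl_char[of k "map (\<lambda>i. s (Z i)) [0..<n]" y] k1 k2 by simp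
    also have "card {i. i < length (map (\<lambda>i. s (Z i)) [0..<n]) \<and> y \<le> ereal (map (\<lambda>i. s (Z i)) [0..<n] ! i)} = card {i. i < n \<and> Z i \<in> sA y}"
      by (rule card_map_eq[where Q="\<lambda>v. y \<le> ereal v"]) (auto simp: sA_def Zsp[OF Z])
    finally show ?thesis .
  qed
  have tau_meas: "tau \<in> borel_measurable ?PM"
  proof (rule borel_measurableI_ge)
    fix y
    have "{Z \<in> space ?PM. y \<le> tau Z} = {Z \<in> space ?PM. k + 1 \<le> int (card {i. i < n \<and> Z i \<in> sA y})}"
      using tau_char by auto
    then show "{Z \<in> space ?PM. y \<le> tau Z} \<in> sets ?PM" using count_ge_sets[OF sAs] by simp
  qed
  have Gt: "(\<lambda>Z. G (tau Z)) \<in> borel_measurable ?PM"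
    by (rule measurable_compose[OF tau_meas antimono_ereal_meas[OF Ganti]])
  have Gooddef: "?Good = {Z \<in> space ?PM. G (tau Z) \<le> eps}"
    unfolding G_def sA_def tau_def k_def by simp
  have Goods: "{Z \<in> space ?PM. G (tau Z) \<le> eps} \<in> sets ?PM"
    by (rule borel_measurable_le[OF Gt measurable_const]) simp
  then show "?Good \<in> sets ?PM" unfolding Gooddef .
  obtain t0 where t0: "measure P {x \<in> space P. s x \<le> t0} = 1 - eps"
    using exists_threshold[OF P s na, of "1 - eps"] eps by auto
  have sAt0: "sA (ereal t0) = {x \<in> space P. t0 \<le> s x}" unfolding sA_def by auto
  have Gt0: "G (ereal t0) = eps"
    unfolding G_def sAt0 using ge_measure(1)[OF P s na, of t0] t0 by simp
  define C where "C = {Z \<in> space ?PM. int (card {i. i < n \<and> Z i \<in> sA (ereal t0)}) \<le> k}"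
  have Cs: "C \<in> sets ?PM" unfolding C_def by (rule count_le_sets[OF sAs])
  have mC: "measure ?PM C \<le> delta"
    unfolding C_def using binom_PiM[OF P sAs[of "ereal t0"], of n k] Gt0 k3 by (simp add: G_def)
  have sub: "space ?PM - C \<subseteq> {Z \<in> space ?PM. G (tau Z) \<le> eps}"
  proof
    fix Z assume Z: "Z \<in> space ?PM - C"
    then have "k + 1 \<le> int (card {i. i < n \<and> Z i \<in> sA (ereal t0)})" unfolding C_def by auto
    then have "ereal t0 \<le> tau Z" using tau_char Z by auto
    then have "G (tau Z) \<le> G (ereal t0)" using Ganti by (simp add: antimonoD)
    then show "Z \<in> {Z \<in> space ?PM. G (tau Z) \<le> eps}" using Z Gt0 by auto
  qed
  have "1 - delta \<le> measure ?PM (space ?PM - C)" using PM.prob_compl[OF Cs] mC by simp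
  also have "\<dots> \<le> measure ?PM {Z \<in> space ?PM. G (tau Z) \<le> eps}"
    by (rule PM.finite_measure_mono[OF sub Goods])
  finally show "measure ?PM ?Good \<ge> 1 - delta" unfolding Gooddef by simp
qed

lemma fn_bound:
  fixes s :: "'a \<Rightarrow> real" and n :: nat
  assumes P: "prob_space P" and s: "s \<in> borel_measurable P"
    and na: "\<And>t. measure P {x \<in> space P. s x = t} = 0"
    and eps: "0 < eps" "eps < 1" and delta: "0 < delta" "delta < 1"
  shows "{Z \<in> space (PiM {0..<n} (\<lambda>_. P)).
            measure P {x \<in> space P. ereal (s x) < kth_smallest (k_star n eps delta + 1) (map (\<lambda>i. s (Z i)) [0..<n])} \<le> eps}
          \<in> sets (PiM {0..<n} (\<lambda>_. P))" (is "?Good \<in> _")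
    and "measure (PiM {0..<n} (\<lambda>_. P)) {Z \<in> space (PiM {0..<n} (\<lambda>_. P)).
            measure P {x \<in> space P. ereal (s x) < kth_smallest (k_star n eps delta + 1) (map (\<lambda>i. s (Z i)) [0..<n])} \<le> eps}
          \<ge> 1 - delta"
proof -
  interpret P: prob_space P by fact
  let ?PM = "PiM {0..<n} (\<lambda>_. P)"
  interpret PM: prob_space ?PM by (rule prob_space_PiM) (rule P)
  define k where "k = k_star n eps delta"
  have k1: "-1 \<le> k" and k2: "k < int n" and k3: "binom_cdf k n eps \<le> delta"
    using k_star_props[OF delta, of n eps] unfolding k_def by auto
  define tau where "tau Z = kth_smallest (k+1) (map (\<lambda>i. s (Z i)) [0..<n])" for Z
  define sA where "sA t = {x \<in> space P. ereal (s x) \<le> t}" for t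
  define sL where "sL t = {x \<in> space P. ereal (s x) < t}" for t
  define H where "H t = measure P (sL t)" for t
  have es: "(\<lambda>x. ereal (s x)) \<in> borel_measurable P" using s by (rule borel_measurable_ereal)
  have sAs: "sA t \<in> sets P" for t
    unfolding sA_def by (rule borel_measurable_le[OF es measurable_const]) simp
  have sLs: "sL t \<in> sets P" for t
    unfolding sL_def by (rule borel_measurable_less[OF es measurable_const]) simp
  have Hmono: "mono H"
  proof (rule monoI)
    fix a b :: ereal assume "a \<le> b"
    then have "sL a \<subseteq> sL b" unfolding sL_def by (auto intro: less_le_trans)
    then show "H a \<le> H b" unfolding H_def by (intro P.finite_measure_mono sLs)
  qed
  have Zsp: "Z i \<in> space P" if "Z \<in> space ?PM" "i < n" for Z i
    using that by (auto simp: space_PiM PiE_iff)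
  have tau_char: "tau Z \<le> y \<longleftrightarrow> k + 1 \<le> int (card {i. i < n \<and> Z i \<in> sA y})" if Z: "Z \<in> space ?PM" for Z y
  proof -
    have "tau Z \<le> y \<longleftrightarrow> k + 1 \<le> int (card {i. i < length (map (\<lambda>i. s (Z i)) [0..<n]) \<and> ereal (map (\<lambda>i. s (Z i)) [0..<n] ! i) \<le> y})"
      unfolding tau_def using ks_char[of k "map (\<lambda>i. s (Z i)) [0..<n]" y] k1 k2 by simp
    also have "card {i. i < length (map (\<lambda>i. s (Z i)) [0..<n]) \<and> ereal (map (\<lambda>i. s (Z i)) [0..<n] ! i) \<le> y} = card {i. i < n \<and> Z i \<in> sA y}"
      by (rule card_map_eq[where Q="\<lambda>v. ereal v \<le> y"]) (auto simp: sA_def Zsp[OF Z])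
    finally show ?thesis .
  qed
  have tau_meas: "tau \<in> borel_measurable ?PM"
  proof (rule borel_measurableI_le)
    fix y
    have "{Z \<in> space ?PM. tau Z \<le> y} = {Z \<in> space ?PM. k + 1 \<le> int (card {i. i < n \<and> Z i \<in> sA y})}"
      using tau_char by auto
    then show "{Z \<in> space ?PM. tau Z \<le> y} \<in> sets ?PM" using count_ge_sets[OF sAs] by simp
  qed
  have Ht: "(\<lambda>Z. H (tau Z)) \<in> borel_measurable ?PM"
    by (rule measurable_compose[OF tau_meas mono_ereal_meas[OF Hmono]])
  have Gooddef: "?Good = {Z \<in> space ?PM. H (tau Z) \<le> eps}"
    unfolding H_def sL_def tau_def k_def by simp
  have Goods: "{Z \<in> space ?PM. H (tau Z) \<le> eps} \<in> sets ?PM"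
    by (rule borel_measurable_le[OF Ht measurable_const]) simp
  then show "?Good \<in> sets ?PM" unfolding Gooddef .
  obtain t0 where t0: "measure P {x \<in> space P. s x \<le> t0} = eps"
    using exists_threshold[OF P s na, of eps] eps by auto
  have sAt0: "sA (ereal t0) = {x \<in> space P. s x \<le> t0}" unfolding sA_def by auto
  have sLt0: "sL (ereal t0) = {x \<in> space P. s x < t0}" unfolding sL_def by auto
  have Ht0: "H (ereal t0) = eps"
    unfolding H_def sLt0 using ge_measure(2)[OF P s na, of t0] t0 by simp
  define C where "C = {Z \<in> space ?PM. int (card {i. i < n \<and> Z i \<in> sA (ereal t0)}) \<le> k}"
  have Cs: "C \<in> sets ?PM" unfolding C_def by (rule count_le_sets[OF sAs])
  have mC: "measure ?PM C \<le> delta"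
    unfolding C_def using binom_PiM[OF P sAs[of "ereal t0"], of n k] t0 k3 by (simp add: sAt0)
  have sub: "space ?PM - C \<subseteq> {Z \<in> space ?PM. H (tau Z) \<le> eps}"
  proof
    fix Z assume Z: "Z \<in> space ?PM - C"
    then have "k + 1 \<le> int (card {i. i < n \<and> Z i \<in> sA (ereal t0)})" unfolding C_def by auto
    then have "tau Z \<le> ereal t0" using tau_char Z by auto
    then have "H (tau Z) \<le> H (ereal t0)" using Hmono by (simp add: monoD)
    then show "Z \<in> {Z \<in> space ?PM. H (tau Z) \<le> eps}" using Z Ht0 by auto
  qed
  have "1 - delta \<le> measure ?PM (space ?PM - C)" using PM.prob_compl[OF Cs] mC by simp
  also have "\<dots> \<le> measure ?PM {Z \<in> space ?PM. H (tau Z) \<le> eps}"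
    by (rule PM.finite_measure_mono[OF sub Goods])
  finally show "measure ?PM ?Good \<ge> 1 - delta" unfolding Gooddef by simp
qed



lemma kl_meas:
  fixes s :: "'a \<Rightarrow> real" and n :: nat and k :: int
  assumes s: "s \<in> borel_measurable P" and k1: "-1 \<le> k" and k2: "k < int n"
  shows "(\<lambda>Z. kth_largest (k+1) (map (\<lambda>i. s (Z i)) [0..<n])) \<in> borel_measurable (PiM {0..<n} (\<lambda>_. P))"
proof -
  let ?PM = "PiM {0..<n} (\<lambda>_. P)"
  define tau where "tau Z = kth_largest (k+1) (map (\<lambda>i. s (Z i)) [0..<n])" for Z
  define sA where "sA t = {x \<in> space P. t \<le> ereal (s x)}" for t
  have es: "(\<lambda>x. ereal (s x)) \<in> borel_measurable P" using s by (rule borel_measurable_ereal)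
  have sAs: "sA t \<in> sets P" for t
    unfolding sA_def by (rule borel_measurable_le[OF measurable_const es]) simp
  have Zsp: "Z i \<in> space P" if "Z \<in> space ?PM" "i < n" for Z i
    using that by (auto simp: space_PiM PiE_iff)
  have tau_char: "y \<le> tau Z \<longleftrightarrow> k + 1 \<le> int (card {i. i < n \<and> Z i \<in> sA y})" if Z: "Z \<in> space ?PM" for Z y
  proof -
    have "y \<le> tau Z \<longleftrightarrow> k + 1 \<le> int (card {i. i < length (map (\<lambda>i. s (Z i)) [0..<n]) \<and> y \<le> ereal (map (\<lambda>i. s (Z i)) [0..<n] ! i)})"
      unfolding tau_def using kl_char[of k "map (\<lambda>i. s (Z i)) [0..<n]" y] k1 k2 by simp
    also have "card {i. i < length (map (\<lambda>i. s (Z i)) [0..<n]) \<and> y \<le> ereal (map (\<lambda>i. s (Z i)) [0..<n] ! i)} = card {i. i < n \<and> Z i \<in> sA y}"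
      by (rule card_map_eq[where Q="\<lambda>v. y \<le> ereal v"]) (auto simp: sA_def Zsp[OF Z])
    finally show ?thesis .
  qed
  have "tau \<in> borel_measurable ?PM"
  proof (rule borel_measurableI_ge)
    fix y
    have "{Z \<in> space ?PM. y \<le> tau Z} = {Z \<in> space ?PM. k + 1 \<le> int (card {i. i < n \<and> Z i \<in> sA y})}"
      using tau_char by auto
    then show "{Z \<in> space ?PM. y \<le> tau Z} \<in> sets ?PM" using count_ge_sets[OF sAs] by simp
  qed
  then show ?thesis unfolding tau_def .
qed

lemma ks_meas:
  fixes s :: "'a \<Rightarrow> real" and n :: nat and k :: int
  assumes s: "s \<in> borel_measurable P" and k1: "-1 \<le> k" and k2: "k < int n"
  shows "(\<lambda>Z. kth_smallest (k+1) (map (\<lambda>i. s (Z i)) [0..<n])) \<in> borel_measurable (PiM {0..<n} (\<lambda>_. P))"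
proof -
  let ?PM = "PiM {0..<n} (\<lambda>_. P)"
  define tau where "tau Z = kth_smallest (k+1) (map (\<lambda>i. s (Z i)) [0..<n])" for Z
  define sA where "sA t = {x \<in> space P. ereal (s x) \<le> t}" for t
  have es: "(\<lambda>x. ereal (s x)) \<in> borel_measurable P" using s by (rule borel_measurable_ereal)
  have sAs: "sA t \<in> sets P" for t
    unfolding sA_def by (rule borel_measurable_le[OF es measurable_const]) simp
  have Zsp: "Z i \<in> space P" if "Z \<in> space ?PM" "i < n" for Z i
    using that by (auto simp: space_PiM PiE_iff)
  have tau_char: "tau Z \<le> y \<longleftrightarrow> k + 1 \<le> int (card {i. i < n \<and> Z i \<in> sA y})" if Z: "Z \<in> space ?PM" for Z y
  proof -
    have "tau Z \<le> y \<longleftrightarrow> k + 1 \<le> int (card {i. i < length (map (\<lambda>i. s (Z i)) [0..<n]) \<and> ereal (map (\<lambda>i. s (Z i)) [0..<n] ! i) \<le> y})"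
      unfolding tau_def using ks_char[of k "map (\<lambda>i. s (Z i)) [0..<n]" y] k1 k2 by simp
    also have "card {i. i < length (map (\<lambda>i. s (Z i)) [0..<n]) \<and> ereal (map (\<lambda>i. s (Z i)) [0..<n] ! i) \<le> y} = card {i. i < n \<and> Z i \<in> sA y}"
      by (rule card_map_eq[where Q="\<lambda>v. ereal v \<le> y"]) (auto simp: sA_def Zsp[OF Z])
    finally show ?thesis .
  qed
  have "tau \<in> borel_measurable ?PM"
  proof (rule borel_measurableI_le)
    fix y
    have "{Z \<in> space ?PM. tau Z \<le> y} = {Z \<in> space ?PM. k + 1 \<le> int (card {i. i < n \<and> Z i \<in> sA y})}"
      using tau_char by auto
    then show "{Z \<in> space ?PM. tau Z \<le> y} \<in> sets ?PM" using count_ge_sets[OF sAs] by simp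
  qed
  then show ?thesis unfolding tau_def .
qed

lemma cond_dist_props:
  fixes D :: "('a \<times> bool) measure" and M :: "'a measure"
  assumes Dp: "prob_space D" and Ds: "sets D = sets (M \<Otimes>\<^sub>M count_space UNIV)"
    and pos: "0 < measure D {p \<in> space D. snd p = b}"
  shows "prob_space (cond_dist D M b)" "space (cond_dist D M b) = space M" "sets (cond_dist D M b) = sets M"
    "\<And>B. B \<in> sets M \<Longrightarrow> measure D {p \<in> space D. snd p = b \<and> fst p \<in> B}
        = measure D {p \<in> space D. snd p = b} * measure (cond_dist D M b) B"
proof -
  interpret D: prob_space D by fact
  define S where "S = {p \<in> space D. snd p = b}"
  have fstm: "fst \<in> measurable D M"
    using measurable_fst[of M "count_space UNIV"] by (simp add: measurable_cong_sets[OF Ds refl])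
  have sndm: "snd \<in> measurable D (count_space UNIV)"
    using measurable_snd[of M "count_space UNIV"] by (simp add: measurable_cong_sets[OF Ds refl])
  have "snd -` {b} \<inter> space D \<in> sets D" by (rule measurable_sets[OF sndm]) simp
  moreover have "snd -` {b} \<inter> space D = S" unfolding S_def by auto
  ultimately have Ss: "S \<in> sets D" by simp
  have e1: "emeasure D S \<noteq> 0" using pos unfolding S_def[symmetric] by (simp add: D.emeasure_eq_measure)
  have e2: "emeasure D S \<noteq> \<infinity>" by (simp add: D.emeasure_eq_measure)
  define U where "U = uniform_measure D S"
  interpret U: prob_space U unfolding U_def by (rule prob_space_uniform_measure[OF e1 e2])
  have fstU: "fst \<in> measurable U M" using fstm unfolding U_def
    by (subst measurable_cong_sets[OF sets_uniform_measure refl])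
  have cd: "cond_dist D M b = distr U M fst" unfolding cond_dist_def U_def S_def by simp
  show "prob_space (cond_dist D M b)" unfolding cd by (rule U.prob_space_distr[OF fstU])
  show "space (cond_dist D M b) = space M" unfolding cd by simp
  show "sets (cond_dist D M b) = sets M" unfolding cd by simp
  fix B assume B: "B \<in> sets M"
  have pre: "fst -` B \<inter> space D \<in> sets D" by (rule measurable_sets[OF fstm B])
  have "measure (cond_dist D M b) B = measure U (fst -` B \<inter> space U)"
    unfolding cd by (rule measure_distr[OF fstU B])
  also have "\<dots> = measure D (S \<inter> (fst -` B \<inter> space D)) / measure D S"
    unfolding U_def by (simp add: measure_uniform_measure[OF e1 e2 pre])
  also have "S \<inter> (fst -` B \<inter> space D) = {p \<in> space D. snd p = b \<and> fst p \<in> B}" unfolding S_def by auto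
  finally have "measure (cond_dist D M b) B = measure D {p \<in> space D. snd p = b \<and> fst p \<in> B} / measure D S" .
  then show "measure D {p \<in> space D. snd p = b \<and> fst p \<in> B}
        = measure D {p \<in> space D. snd p = b} * measure (cond_dist D M b) B"
    using pos unfolding S_def by simp
qed

lemma y_ad_ord:
  assumes "b \<le> a"
  shows "y_ad d a b x = (if a \<le> ereal (d x) then Some True else if ereal (d x) < b then Some False else None)"
proof -
  consider "a \<le> ereal (d x)" | "b \<le> ereal (d x)" "\<not> a \<le> ereal (d x)" | "ereal (d x) < b" by force
  then show ?thesis
  proof cases
    case 1
    then have "b \<le> ereal (d x)" using assms by (rule order_trans[rotated])
    then show ?thesis using 1 by (simp add: y_ad_def C_fn_def C_fp_def Let_def)
  next
    case 2 then show ?thesis by (auto simp: y_ad_def C_fn_def C_fp_def Let_def)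
  next
    case 3
    then have "\<not> a \<le> ereal (d x)" using assms by auto
    then show ?thesis using 3 by (auto simp: y_ad_def C_fn_def C_fp_def Let_def)
  qed
qed



theorem mainTheorem6:
  fixes M :: "'a measure" and d :: "'a \<Rightarrow> real" and D :: "('a \<times> bool) measure"
    and eps_fp delta_fp eps_fn delta_fn :: real and n m :: nat
  assumes d_meas: "d \<in> borel_measurable M"
    and D_prob: "prob_space D"
    and D_sets: "sets D = sets (M \<Otimes>\<^sub>M count_space UNIV)"
    and p_ano: "0 < measure D {p \<in> space D. snd p}" "measure D {p \<in> space D. snd p} < 1"
    and no_atoms_nm: "\<And>t. measure (cond_dist D M False) {x \<in> space M. d x = t} = 0"
    and no_atoms_ano: "\<And>t. measure (cond_dist D M True) {x \<in> space M. d x = t} = 0"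
    and eps_fp: "0 < eps_fp" "eps_fp < 1" and delta_fp: "0 < delta_fp" "delta_fp < 1"
    and eps_fn: "0 < eps_fn" "eps_fn < 1" and delta_fn: "0 < delta_fn" "delta_fn < 1"
    and n: "n \<ge> 1" and m: "m \<ge> 1"
  shows "measure (PiM {0..<n} (\<lambda>_. cond_dist D M False) \<Otimes>\<^sub>M PiM {0..<m} (\<lambda>_. cond_dist D M True))
           {(Z, Z') \<in> space (PiM {0..<n} (\<lambda>_. cond_dist D M False) \<Otimes>\<^sub>M PiM {0..<m} (\<lambda>_. cond_dist D M True)).
              tau_fn d m eps_fn delta_fn Z' < tau_fp d n eps_fp delta_fp Z
              \<or> measure D {(x, y) \<in> space D.
                   y_ad d (tau_fn d m eps_fn delta_fn Z') (tau_fp d n eps_fp delta_fp Z) x \<noteq> None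
                   \<and> y_ad d (tau_fn d m eps_fn delta_fn Z') (tau_fp d n eps_fp delta_fp Z) x \<noteq> Some y}
                 \<le> max eps_fp eps_fn}
         \<ge> 1 - (delta_fp + delta_fn)"
proof -
  interpret D: prob_space D by fact
  let ?P0 = "cond_dist D M False" and ?P1 = "cond_dist D M True"
  let ?PM0 = "PiM {0..<n} (\<lambda>_. ?P0)" and ?PM1 = "PiM {0..<m} (\<lambda>_. ?P1)"
  define c where "c = max eps_fp eps_fn"
  define p1 where "p1 = measure D {p \<in> space D. snd p}"
  have fstm: "fst \<in> measurable D M"
    using measurable_fst[of M "count_space UNIV"] by (simp add: measurable_cong_sets[OF D_sets refl])
  have sndm: "snd \<in> measurable D (count_space UNIV)"
    using measurable_snd[of M "count_space UNIV"] by (simp add: measurable_cong_sets[OF D_sets refl])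
  have spD: "space D = space M \<times> UNIV"
    using sets_eq_imp_space_eq[OF D_sets] by (simp add: space_pair_measure)
  have "snd -` {True} \<inter> space D \<in> sets D" by (rule measurable_sets[OF sndm]) simp
  moreover have "snd -` {True} \<inter> space D = {p \<in> space D. snd p}" by auto
  ultimately have S1s: "{p \<in> space D. snd p} \<in> sets D" by simp
  have S0eq: "{p \<in> space D. snd p = False} = space D - {p \<in> space D. snd p}" by auto
  have S0s: "{p \<in> space D. snd p = False} \<in> sets D" unfolding S0eq using S1s by auto
  have p0: "measure D {p \<in> space D. snd p = False} = 1 - p1"
    unfolding S0eq p1_def by (rule D.prob_compl[OF S1s])
  have pos0: "0 < measure D {p \<in> space D. snd p = False}" using p0 p_ano unfolding p1_def by simp
  have pos1: "0 < measure D {p \<in> space D. snd p = True}" using p_ano by simp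
  note cp0 = cond_dist_props[OF D_prob D_sets pos0]
  note cp1 = cond_dist_props[OF D_prob D_sets pos1]
  interpret P0: prob_space ?P0 by (rule cp0(1))
  interpret P1: prob_space ?P1 by (rule cp1(1))
  have d0: "d \<in> borel_measurable ?P0" using d_meas by (simp add: measurable_cong_sets[OF cp0(3) refl])
  have d1: "d \<in> borel_measurable ?P1" using d_meas by (simp add: measurable_cong_sets[OF cp1(3) refl])
  have na0: "measure ?P0 {x \<in> space ?P0. d x = t} = 0" for t using no_atoms_nm[of t] cp0(2) by simp
  have na1: "measure ?P1 {x \<in> space ?P1. d x = t} = 0" for t using no_atoms_ano[of t] cp1(2) by simp
  interpret PM0: prob_space ?PM0 by (rule prob_space_PiM) (rule cp0(1))
  interpret PM1: prob_space ?PM1 by (rule prob_space_PiM) (rule cp1(1))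
  interpret PP: pair_prob_space ?PM0 ?PM1
    unfolding pair_prob_space_def pair_sigma_finite_def
    using prob_space_imp_sigma_finite PM0.prob_space_axioms PM1.prob_space_axioms by blast
  define tp where "tp = tau_fp d n eps_fp delta_fp"
  define tn where "tn = tau_fn d m eps_fn delta_fn"
  have kp: "-1 \<le> k_star n eps_fp delta_fp" "k_star n eps_fp delta_fp < int n"
    using k_star_props[OF delta_fp] by auto
  have kn: "-1 \<le> k_star m eps_fn delta_fn" "k_star m eps_fn delta_fn < int m"
    using k_star_props[OF delta_fn] by auto
  have tpm: "tp \<in> borel_measurable ?PM0"
    using kl_meas[OF d0 kp] unfolding tp_def tau_fp_def .
  have tnm: "tn \<in> borel_measurable ?PM1"
    using ks_meas[OF d1 kn] unfolding tn_def tau_fn_def .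
  define G0 where "G0 = {Z \<in> space ?PM0. measure ?P0 {x \<in> space M. tp Z \<le> ereal (d x)} \<le> eps_fp}"
  define G1 where "G1 = {Z \<in> space ?PM1. measure ?P1 {x \<in> space M. ereal (d x) < tn Z} \<le> eps_fn}"
  note fpb = fp_bound[OF cp0(1) d0 na0 eps_fp delta_fp, of n]
  note fnb = fn_bound[OF cp1(1) d1 na1 eps_fn delta_fn, of m]
  have G0eq: "G0 = {Z \<in> space ?PM0.
            measure ?P0 {x \<in> space ?P0. kth_largest (k_star n eps_fp delta_fp + 1) (map (\<lambda>i. d (Z i)) [0..<n]) \<le> ereal (d x)} \<le> eps_fp}"
    unfolding G0_def tp_def tau_fp_def cp0(2) ..
  have G1eq: "G1 = {Z \<in> space ?PM1.
            measure ?P1 {x \<in> space ?P1. ereal (d x) < kth_smallest (k_star m eps_fn delta_fn + 1) (map (\<lambda>i. d (Z i)) [0..<m])} \<le> eps_fn}"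
    unfolding G1_def tn_def tau_fn_def cp1(2) ..
  have G0s: "G0 \<in> sets ?PM0" and mG0: "measure ?PM0 G0 \<ge> 1 - delta_fp"
    unfolding G0eq using fpb by auto
  have G1s: "G1 \<in> sets ?PM1" and mG1: "measure ?PM1 G1 \<ge> 1 - delta_fn"
    unfolding G1eq using fnb by auto
  have ddm: "(\<lambda>p. ereal (d (fst p))) \<in> borel_measurable D"
    by (rule borel_measurable_ereal[OF measurable_compose[OF fstm d_meas]])
  define L1 where "L1 a = {p \<in> space D. \<not> snd p \<and> a \<le> ereal (d (fst p))}" for a
  define L2 where "L2 b = {p \<in> space D. snd p \<and> ereal (d (fst p)) < b}" for b
  define h1 where "h1 a = measure D (L1 a)" for a
  define h2 where "h2 b = measure D (L2 b)" for b
  have L1s: "L1 a \<in> sets D" for a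
  proof -
    have "{p \<in> space D. a \<le> ereal (d (fst p))} \<in> sets D"
      by (rule borel_measurable_le[OF measurable_const ddm]) simp
    moreover have "L1 a = {p \<in> space D. snd p = False} \<inter> {p \<in> space D. a \<le> ereal (d (fst p))}"
      unfolding L1_def by auto
    ultimately show ?thesis using S0s by auto
  qed
  have L2s: "L2 b \<in> sets D" for b
  proof -
    have "{p \<in> space D. ereal (d (fst p)) < b} \<in> sets D"
      by (rule borel_measurable_less[OF ddm measurable_const]) simp
    moreover have "L2 b = {p \<in> space D. snd p} \<inter> {p \<in> space D. ereal (d (fst p)) < b}"
      unfolding L2_def by auto
    ultimately show ?thesis using S1s by auto
  qed
  have h1anti: "antimono h1"
  proof (rule antimonoI)
    fix a b :: ereal assume "a \<le> b"
    then have "L1 b \<subseteq> L1 a" unfolding L1_def by (auto intro: order_trans)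
    then show "h1 b \<le> h1 a" unfolding h1_def by (intro D.finite_measure_mono L1s)
  qed
  have h2mono: "mono h2"
  proof (rule monoI)
    fix a b :: ereal assume "a \<le> b"
    then have "L2 a \<subseteq> L2 b" unfolding L2_def by (auto intro: less_le_trans)
    then show "h2 a \<le> h2 b" unfolding h2_def by (intro D.finite_measure_mono L2s)
  qed
  have errsplit: "measure D {(x, y) \<in> space D. y_ad d a b x \<noteq> None \<and> y_ad d a b x \<noteq> Some y} = h1 a + h2 b"
    if ba: "b \<le> a" for a b
  proof -
    have "{(x, y) \<in> space D. y_ad d a b x \<noteq> None \<and> y_ad d a b x \<noteq> Some y} = L1 a \<union> L2 b"
      unfolding L1_def L2_def by (auto simp: y_ad_ord[OF ba] split: if_splits dest: order.strict_trans2[OF _ ba])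
    moreover have "L1 a \<inter> L2 b = {}" unfolding L1_def L2_def by auto
    ultimately show ?thesis unfolding h1_def h2_def using L1s L2s by (simp add: D.finite_measure_Union)
  qed
  define Ev where "Ev = {w \<in> space (?PM0 \<Otimes>\<^sub>M ?PM1). tn (snd w) < tp (fst w) \<or> h1 (tn (snd w)) + h2 (tp (fst w)) \<le> c}"
  have tpf: "(\<lambda>w. tp (fst w)) \<in> borel_measurable (?PM0 \<Otimes>\<^sub>M ?PM1)"
    by (rule measurable_compose[OF measurable_fst tpm])
  have tns: "(\<lambda>w. tn (snd w)) \<in> borel_measurable (?PM0 \<Otimes>\<^sub>M ?PM1)"
    by (rule measurable_compose[OF measurable_snd tnm])
  have hsum: "(\<lambda>w. h1 (tn (snd w)) + h2 (tp (fst w))) \<in> borel_measurable (?PM0 \<Otimes>\<^sub>M ?PM1)"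
    by (intro borel_measurable_add measurable_compose[OF tns antimono_ereal_meas[OF h1anti]]
        measurable_compose[OF tpf mono_ereal_meas[OF h2mono]])
  have Evs: "Ev \<in> sets (?PM0 \<Otimes>\<^sub>M ?PM1)"
  proof -
    have a: "{w \<in> space (?PM0 \<Otimes>\<^sub>M ?PM1). tn (snd w) < tp (fst w)} \<in> sets (?PM0 \<Otimes>\<^sub>M ?PM1)"
      by (rule borel_measurable_less[OF tns tpf])
    have b: "{w \<in> space (?PM0 \<Otimes>\<^sub>M ?PM1). h1 (tn (snd w)) + h2 (tp (fst w)) \<le> c} \<in> sets (?PM0 \<Otimes>\<^sub>M ?PM1)"
      by (rule borel_measurable_le[OF hsum measurable_const]) simp
    have "Ev = {w \<in> space (?PM0 \<Otimes>\<^sub>M ?PM1). tn (snd w) < tp (fst w)} \<union> {w \<in> space (?PM0 \<Otimes>\<^sub>M ?PM1). h1 (tn (snd w)) + h2 (tp (fst w)) \<le> c}"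
      unfolding Ev_def by auto
    then show ?thesis using a b by auto
  qed
  have Eveq: "{(Z, Z') \<in> space (?PM0 \<Otimes>\<^sub>M ?PM1).
              tn Z' < tp Z
              \<or> measure D {(x, y) \<in> space D. y_ad d (tn Z') (tp Z) x \<noteq> None \<and> y_ad d (tn Z') (tp Z) x \<noteq> Some y} \<le> c}
        = Ev"
  proof (intro equalityI subsetI)
    fix w assume w: "w \<in> {(Z, Z') \<in> space (?PM0 \<Otimes>\<^sub>M ?PM1).
              tn Z' < tp Z
              \<or> measure D {(x, y) \<in> space D. y_ad d (tn Z') (tp Z) x \<noteq> None \<and> y_ad d (tn Z') (tp Z) x \<noteq> Some y} \<le> c}"
    obtain Z Z' where wz: "w = (Z, Z')" by (cases w)
    show "w \<in> Ev"
    proof (cases "tn Z' < tp Z")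
      case True then show ?thesis using w unfolding Ev_def wz by auto
    next
      case False
      then have "tp Z \<le> tn Z'" by simp
      note e = errsplit[OF this]
      have w': "(Z, Z') \<in> space (?PM0 \<Otimes>\<^sub>M ?PM1) \<and> (tn Z' < tp Z \<or> h1 (tn Z') + h2 (tp Z) \<le> c)"
        using w unfolding wz by (simp only: mem_Collect_eq prod.case e)
      then show ?thesis unfolding Ev_def wz by simp
    qed
  next
    fix w assume w: "w \<in> Ev"
    obtain Z Z' where wz: "w = (Z, Z')" by (cases w)
    show "w \<in> {(Z, Z') \<in> space (?PM0 \<Otimes>\<^sub>M ?PM1).
              tn Z' < tp Z
              \<or> measure D {(x, y) \<in> space D. y_ad d (tn Z') (tp Z) x \<noteq> None \<and> y_ad d (tn Z') (tp Z) x \<noteq> Some y} \<le> c}"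
    proof (cases "tn Z' < tp Z")
      case True then show ?thesis using w unfolding Ev_def wz by auto
    next
      case False
      then have "tp Z \<le> tn Z'" by simp
      note e = errsplit[OF this]
      have w': "(Z, Z') \<in> space (?PM0 \<Otimes>\<^sub>M ?PM1) \<and> (tn Z' < tp Z \<or> h1 (tn Z') + h2 (tp Z) \<le> c)"
        using w unfolding Ev_def wz by simp
      then show ?thesis unfolding wz by (simp only: mem_Collect_eq prod.case e)
    qed
  qed
  have dM: "{x \<in> space M. t \<le> ereal (d x)} \<in> sets M" "{x \<in> space M. ereal (d x) < t} \<in> sets M" for t
    using borel_measurable_le[OF measurable_const[of t] borel_measurable_ereal[OF d_meas]]
      borel_measurable_less[OF borel_measurable_ereal[OF d_meas] measurable_const[of t]] by auto
  have h1eq: "h1 t = (1 - p1) * measure ?P0 {x \<in> space M. t \<le> ereal (d x)}" for t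
  proof -
    have "L1 t = {p \<in> space D. snd p = False \<and> fst p \<in> {x \<in> space M. t \<le> ereal (d x)}}"
      unfolding L1_def using spD by auto
    then show ?thesis unfolding h1_def using cp0(4)[OF dM(1)] p0 by simp
  qed
  have h2eq: "h2 t = p1 * measure ?P1 {x \<in> space M. ereal (d x) < t}" for t
  proof -
    have "L2 t = {p \<in> space D. snd p = True \<and> fst p \<in> {x \<in> space M. ereal (d x) < t}}"
      unfolding L2_def using spD by auto
    then show ?thesis unfolding h2_def using cp1(4)[OF dM(2)] by (simp add: p1_def)
  qed
  have p1b: "0 < p1" "p1 < 1" using p_ano unfolding p1_def by auto
  have sub: "G0 \<times> G1 \<subseteq> Ev"
  proof
    fix w assume w: "w \<in> G0 \<times> G1"
    obtain Z Z' where wz: "w = (Z, Z')" by (cases w)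
    have Z: "Z \<in> G0" and Z': "Z' \<in> G1" using w wz by auto
    have wsp: "w \<in> space (?PM0 \<Otimes>\<^sub>M ?PM1)" using Z Z' wz unfolding G0_def G1_def by (simp add: space_pair_measure)
    show "w \<in> Ev"
    proof (cases "tn Z' < tp Z")
      case True then show ?thesis using wsp unfolding Ev_def wz by auto
    next
      case False
      then have le: "tp Z \<le> tn Z'" by simp
      have "h1 (tn Z') \<le> h1 (tp Z)" using h1anti le by (simp add: antimonoD)
      also have "\<dots> \<le> (1 - p1) * eps_fp"
        unfolding h1eq using Z p1b unfolding G0_def by (intro mult_left_mono) auto
      finally have a: "h1 (tn Z') \<le> (1 - p1) * eps_fp" .
      have "h2 (tp Z) \<le> h2 (tn Z')" using h2mono le by (simp add: monoD)
      also have "\<dots> \<le> p1 * eps_fn"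
        unfolding h2eq using Z' p1b unfolding G1_def by (intro mult_left_mono) auto
      finally have b: "h2 (tp Z) \<le> p1 * eps_fn" .
      have "(1 - p1) * eps_fp \<le> (1 - p1) * c" using p1b unfolding c_def by (intro mult_left_mono) auto
      moreover have "p1 * eps_fn \<le> p1 * c" using p1b unfolding c_def by (intro mult_left_mono) auto
      ultimately have "h1 (tn Z') + h2 (tp Z) \<le> c" using a b by (simp add: algebra_simps)
      then show ?thesis using wsp unfolding Ev_def wz by auto
    qed
  qed
  have prod: "measure (?PM0 \<Otimes>\<^sub>M ?PM1) (G0 \<times> G1) = measure ?PM0 G0 * measure ?PM1 G1"
  proof -
    have "emeasure (?PM0 \<Otimes>\<^sub>M ?PM1) (G0 \<times> G1) = emeasure ?PM0 G0 * emeasure ?PM1 G1"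
      by (rule PM1.emeasure_pair_measure_Times[OF G0s G1s])
    also have "\<dots> = ennreal (measure ?PM0 G0 * measure ?PM1 G1)"
      by (simp add: PM0.emeasure_eq_measure PM1.emeasure_eq_measure ennreal_mult)
    finally show ?thesis by (simp add: measure_def)
  qed
  have "1 - (delta_fp + delta_fn) \<le> (1 - delta_fp) * (1 - delta_fn)"
    using delta_fp delta_fn by (simp add: algebra_simps)
  also have "\<dots> \<le> measure ?PM0 G0 * measure ?PM1 G1"
    using mG0 mG1 delta_fp delta_fn by (intro mult_mono) auto
  also have "\<dots> = measure (?PM0 \<Otimes>\<^sub>M ?PM1) (G0 \<times> G1)" using prod by simp
  also have "\<dots> \<le> measure (?PM0 \<Otimes>\<^sub>M ?PM1) Ev"
    by (rule PP.finite_measure_mono[OF sub Evs])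
  finally have "1 - (delta_fp + delta_fn) \<le> measure (?PM0 \<Otimes>\<^sub>M ?PM1) Ev" .
  then show ?thesis unfolding tp_def[symmetric] tn_def[symmetric] c_def[symmetric] Eveq .
qed


end
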